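(* Let $(P_n)_{n\ge0}$ be the monic polynomials defined by $P_{-1}=0$, $P_0=1$, $xP_n=P_{n+1}+C_nP_{n-1}$, with $C_n=\tfrac14(1-(-1)^nq^{n/2})(1-(-1)^nq^{(n-1)/2})$ for every integer $n$ (so $C_0=0$). Define $a_n=(\alpha^2-1)\gamma_n$, $b_n=-\tfrac12\big(1-(-1)^nq^{n/2}\big)\big((-1)^n-q^{-(n-1)/2}\big)$, $c_n=b_{n+1}C_n-\alpha b_nC_{n-1}-(\alpha^2-1)\gamma_nC_n$, $d_n=(b_{n-1}C_n-\alpha b_nC_{n-1})C_{n-2}$. Then for all $n\ge1$, with the convention $P_j=0$ for $j<0$, $$\mathcal S_qP_n=\alpha_nP_n+b_nC_{n-1}P_{n-2},\qquad U_2\,\mathcal D_qP_n=a_nP_{n+1}+c_nP_{n-1}+d_nP_{n-3}.$$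
   Context: Fix $0<q<1$. With $x(s)=(q^s+q^{-s})/2$, for a complex polynomial $f$: $\mathcal D_qf(x(s))=\frac{f(x(s+1/2))-f(x(s-1/2))}{x(s+1/2)-x(s-1/2)}$, $\mathcal S_qf(x(s))=\frac{f(x(s+1/2))+f(x(s-1/2))}{2}$ (both polynomials). $\alpha=(q^{1/2}+q^{-1/2})/2$, $\alpha_n=(q^{n/2}+q^{-n/2})/2$, $\gamma_n=(q^{n/2}-q^{-n/2})/(q^{1/2}-q^{-1/2})$, $U_2(x)=(\alpha^2-1)(x^2-1)$. *)

theory Defs
  imports "HOL-Computational_Algebra.Polynomial" Complex_Main
begin

definition xq :: "real \<Rightarrow> real \<Rightarrow> real" where
  "xq q s = (q powr s + q powr (-s)) / 2"

text \<open>Divided-difference operator D_q: the unique polynomial g with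
  g(x(s)) = (f(x(s+1/2)) - f(x(s-1/2))) / (x(s+1/2) - x(s-1/2)) wherever the
  denominator is nonzero (for real s this is exactly s \<noteq> 0; the values x(s), s > 0,
  form an infinite set, so g is unique).\<close>
definition Dq :: "real \<Rightarrow> complex poly \<Rightarrow> complex poly" where
  "Dq q f = (THE g. \<forall>s::real. xq q (s + 1/2) \<noteq> xq q (s - 1/2) \<longrightarrow>
       poly g (complex_of_real (xq q s)) =
         (poly f (complex_of_real (xq q (s + 1/2))) - poly f (complex_of_real (xq q (s - 1/2))))
         / complex_of_real (xq q (s + 1/2) - xq q (s - 1/2)))"

definition Sq :: "real \<Rightarrow> complex poly \<Rightarrow> complex poly" where
  "Sq q f = (THE g. \<forall>s::real.
       poly g (complex_of_real (xq q s)) =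
         (poly f (complex_of_real (xq q (s + 1/2))) + poly f (complex_of_real (xq q (s - 1/2)))) / 2)"

definition alpha :: "real \<Rightarrow> real" where
  "alpha q = (q powr (1/2) + q powr (-1/2)) / 2"

definition alphan :: "real \<Rightarrow> int \<Rightarrow> real" where
  "alphan q n = (q powr (real_of_int n / 2) + q powr (- real_of_int n / 2)) / 2"

definition gamman :: "real \<Rightarrow> int \<Rightarrow> real" where
  "gamman q n = (q powr (real_of_int n / 2) - q powr (- real_of_int n / 2))
                / (q powr (1/2) - q powr (-1/2))"

definition U2 :: "real \<Rightarrow> complex poly" where
  "U2 q = smult (complex_of_real ((alpha q)\<^sup>2 - 1)) [:-1, 0, 1:]"

definition Cn :: "real \<Rightarrow> int \<Rightarrow> real" where
  "Cn q n = (1/4) * (1 - ((-1::real) powi n) * q powr (real_of_int n / 2))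
                  * (1 - ((-1::real) powi n) * q powr ((real_of_int n - 1) / 2))"

text \<open>Monic polynomials: P_0 = 1, P_1 = x (since C_0 P_{-1} = 0),
  P_{n+2} = x P_{n+1} - C_{n+1} P_n.\<close>
fun Pn :: "real \<Rightarrow> nat \<Rightarrow> complex poly" where
  "Pn q 0 = 1"
| "Pn q (Suc 0) = [:0, 1:]"
| "Pn q (Suc (Suc n)) = [:0, 1:] * Pn q (Suc n) - smult (complex_of_real (Cn q (int n + 1))) (Pn q n)"

definition P :: "real \<Rightarrow> int \<Rightarrow> complex poly" where
  "P q j = (if j < 0 then 0 else Pn q (nat j))"

definition an :: "real \<Rightarrow> int \<Rightarrow> real" where
  "an q n = ((alpha q)\<^sup>2 - 1) * gamman q n"

definition bn :: "real \<Rightarrow> int \<Rightarrow> real" where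
  "bn q n = - (1/2) * (1 - ((-1::real) powi n) * q powr (real_of_int n / 2))
                    * (((-1::real) powi n) - q powr (- (real_of_int n - 1) / 2))"

definition cn :: "real \<Rightarrow> int \<Rightarrow> real" where
  "cn q n = bn q (n + 1) * Cn q n - alpha q * bn q n * Cn q (n - 1)
            - ((alpha q)\<^sup>2 - 1) * gamman q n * Cn q n"

definition dn :: "real \<Rightarrow> int \<Rightarrow> real" where
  "dn q n = (bn q (n - 1) * Cn q n - alpha q * bn q n * Cn q (n - 1)) * Cn q (n - 2)"

end

theory Submission imports Defs "HOL-Library.Infinite_Set" begin
lemma T_B1: fixes Q R t u e h :: real assumes "Q*R = 1" "t*u = 1" "e*e = 1" "2*h = 1" shows "((Q-R)*(t*Q - u*R)*h*h) = ((Q+R)*h)*((Q-R)*(t - u)*h*h) + (((Q+R)*h)^2-1)*((t + u)*h)"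
  using assms by algebra

lemma T_B2: fixes Q R t u e h :: real assumes "Q*R = 1" "t*u = 1" "e*e = 1" "2*h = 1" shows "(((-h)*(1 - e*t*Q^2)*(e - u*R))*(h*h*(1 - (-e)*t*Q)*(1 - (-e)*t)) - ((Q+R)*h)*((-h)*(1 - (-e)*t*Q)*((-e) - u))*(h*h*(1 - e*t)*(1 - e*t*R)) - ((Q-R)*(t*Q - u*R)*h*h)*(h*h*(1 - (-e)*t*Q)*(1 - (-e)*t))) = ((Q+R)*h)*((Q-R)*(t - u)*h*h)*(h*h*(1 - (-e)*t*Q)*(1 - (-e)*t)) + ((Q+R)*h)*(((-h)*(1 - (-e)*t*Q)*((-e) - u))*(h*h*(1 - e*t)*(1 - e*t*R)) - ((Q+R)*h)*((-h)*(1 - e*t)*(e - u*Q))*(h*h*(1 - (-e)*t*R)*(1 - (-e)*t*R^2)) - ((Q-R)*(t - u)*h*h)*(h*h*(1 - e*t)*(1 - e*t*R))) + (((Q+R)*h)^2-1)*((t + u)*h)*((h*h*(1 - (-e)*t*Q)*(1 - (-e)*t))+(h*h*(1 - e*t)*(1 - e*t*R))-1) + (((Q+R)*h)^2-1)*((-h)*(1 - e*t)*(e - u*Q))*(h*h*(1 - (-e)*t*R)*(1 - (-e)*t*R^2)) - (h*h*(1 - e*t)*(1 - e*t*R))*((Q-R)*(t*R - u*Q)*h*h)"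
  using assms by algebra

lemma T_B3: fixes Q R t u e h :: real assumes "Q*R = 1" "t*u = 1" "e*e = 1" "2*h = 1" shows "((((-h)*(1 - e*t)*(e - u*Q))*(h*h*(1 - (-e)*t*Q)*(1 - (-e)*t)) - ((Q+R)*h)*((-h)*(1 - (-e)*t*Q)*((-e) - u))*(h*h*(1 - e*t)*(1 - e*t*R)))*(h*h*(1 - (-e)*t*R)*(1 - (-e)*t*R^2))) = ((Q+R)*h)*(((-h)*(1 - (-e)*t*Q)*((-e) - u))*(h*h*(1 - e*t)*(1 - e*t*R)) - ((Q+R)*h)*((-h)*(1 - e*t)*(e - u*Q))*(h*h*(1 - (-e)*t*R)*(1 - (-e)*t*R^2)) - ((Q-R)*(t - u)*h*h)*(h*h*(1 - e*t)*(1 - e*t*R)))*(h*h*(1 - (-e)*t*R)*(1 - (-e)*t*R^2)) + ((Q+R)*h)*((((-h)*(1 - (-e)*t*R)*((-e) - u*Q^2))*(h*h*(1 - e*t)*(1 - e*t*R)) - ((Q+R)*h)*((-h)*(1 - e*t)*(e - u*Q))*(h*h*(1 - (-e)*t*R)*(1 - (-e)*t*R^2)))*(h*h*(1 - e*t*R^2)*(1 - e*t*R^3))) + (((Q+R)*h)^2-1)*(((t + u)*h)*(h*h*(1 - e*t)*(1 - e*t*R))*(h*h*(1 - (-e)*t*R)*(1 - (-e)*t*R^2)) + ((-h)*(1 - e*t)*(e - u*Q))*(h*h*(1 - (-e)*t*R)*(1 - (-e)*t*R^2))*((h*h*(1 - (-e)*t*R)*(1 - (-e)*t*R^2))+(h*h*(1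 - e*t*R^2)*(1 - e*t*R^3))-1)) - (h*h*(1 - e*t)*(1 - e*t*R))*(((-h)*(1 - e*t)*(e - u*Q))*(h*h*(1 - (-e)*t*R)*(1 - (-e)*t*R^2)) - ((Q+R)*h)*((-h)*(1 - (-e)*t*R)*((-e) - u*Q^2))*(h*h*(1 - e*t*R^2)*(1 - e*t*R^3)) - ((Q-R)*(t*R - u*Q)*h*h)*(h*h*(1 - (-e)*t*R)*(1 - (-e)*t*R^2)))"
  using assms by algebra

lemma T_B4i: fixes Q R t u e h :: real assumes "Q*R = 1" "t*u = 1" "e*e = 1" "2*h = 1" shows "2*((Q+R)*h)*((-h)*(1 - (-e)*t*R)*((-e) - u*Q^2))*(h*h*(1 - e*t)*(1 - e*t*R))*(h*h*(1 - e*t*R^2)*(1 - e*t*R^3)) - ((-h)*(1 - e*t)*(e - u*Q))*(h*h*(1 - (-e)*t*R)*(1 - (-e)*t*R^2))*(h*h*(1 - e*t*R^2)*(1 - e*t*R^3)) - (h*h*(1 - e*t)*(1 - e*t*R))*((-h)*(1 - e*t*R^2)*(e - u*Q^3))*(h*h*(1 - (-e)*t*R)*(1 - (-e)*t*R^2)) = 0"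
  using assms by algebra

lemma T_A1: fixes Q R t u e h :: real assumes "Q*R = 1" "t*u = 1" "e*e = 1" "2*h = 1" shows "((t*Q + u*R)*h) = ((Q+R)*h)*((t + u)*h) + ((Q-R)*(t - u)*h*h)"
  using assms by algebra

lemma T_A2: fixes Q R t u e h :: real assumes "Q*R = 1" "t*u = 1" "e*e = 1" "2*h = 1" shows "((Q+R)*h)*((t + u)*h) - ((t*R + u*Q)*h) = ((Q-R)*(t - u)*h*h)"
  using assms by algebra



lemma pw: assumes "0 < q" shows "q powr (real_of_int m / 2) = sqrt q powi m"
proof -
  have "q powr (real_of_int m / 2) = (q powr (1/2)) powr (real_of_int m)"
    by (simp add: powr_powr)
  also have "q powr (1/2) = sqrt q" using assms by (simp add: powr_half_sqrt)
  finally show ?thesis using assms by (simp add: powr_real_of_int')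
qed

locale qq = fixes q :: real and n :: int assumes q0: "0 < q" and q1: "q < 1"
begin
definition "Q = sqrt q"
definition "t = Q powi n"
definition "e = ((-1::real) powi n)"
lemma Q0: "0 < Q" and Q1: "Q < 1" using q0 q1 by (auto simp: Q_def)
lemma t0: "0 < t" using Q0 by (simp add: t_def)
lemma e1: "e = 1 \<or> e = -1" unfolding e_def
  by (metis power_int_minus_one_mult_self square_eq_1_iff power2_eq_square)

lemma sh: "(-1::real) powi m = e * (-1) powi (m - n)" "Q powi m = t * Q powi (m - n)"
  unfolding e_def t_def using Q0 by (simp_all flip: power_int_add)

lemma pw': "q powr (real_of_int m / 2) = Q powi m" using pw[OF q0] by (simp add: Q_def)

lemma Cf: "Cn q m = 1/4*(1 - e*(-1) powi (m-n)*t*Q powi (m-n))*(1 - e*(-1) powi (m-n)*t*Q powi (m-n-1))"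
proof -
  have "(real_of_int m - 1)/2 = real_of_int (m-1)/2" by simp
  then show ?thesis unfolding Cn_def
    by (simp only: pw') (simp add: sh[of m] sh[of "m-1"] algebra_simps)
qed
lemma bf: "bn q m = -1/2*(1 - e*(-1) powi (m-n)*t*Q powi (m-n))*(e*(-1) powi (m-n) - Q powi (1-(m-n)) / t)"
proof -
  have "- (real_of_int m - 1)/2 = real_of_int (1-m)/2" by simp
  moreover have "Q powi (1 - m) = Q powi (1 - (m - n)) / t" unfolding t_def using Q0
    by (simp add: power_int_diff)
  ultimately show ?thesis unfolding bn_def
    by (simp only: pw') (simp add: sh[of m] algebra_simps)
qed
lemma alf: "alphan q m = (t * Q powi (m-n) + 1/(t * Q powi (m-n)))/2"
proof -
  have "- real_of_int m /2 = real_of_int (-m)/2" by simp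
  then show ?thesis unfolding alphan_def
    by (simp only: pw') (simp add: sh[of m] power_int_minus field_simps)
qed
lemma gaf: "gamman q m = (t * Q powi (m-n) - 1/(t * Q powi (m-n)))/(Q - 1/Q)"
proof -
  have "- real_of_int m /2 = real_of_int (-m)/2" by simp
  moreover have "q powr (1/2) = Q" "q powr (-1/2) = 1/Q" using q0 by (simp_all add: Q_def powr_half_sqrt powr_minus_divide)
  ultimately show ?thesis unfolding gamman_def
    by (simp only: pw') (simp add: sh[of m] power_int_minus field_simps)
qed
lemma QQ: "Q*Q - 1 \<noteq> 0" using Q0 Q1
proof -
  have "Q*Q < 1*1" using Q0 Q1 by (intro mult_strict_mono) auto
  then show ?thesis by simp
qed
lemma gaf2: "gamman q m = Q * (t * Q powi (m-n) - 1/(t * Q powi (m-n)))/(Q*Q - 1)"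
proof -
  have "Q - 1/Q = (Q*Q-1)/Q" using Q0 by (simp add: field_simps)
  then show ?thesis unfolding gaf by simp
qed
lemma af: "alpha q = (Q + 1/Q)/2"
  using q0 by (simp add: alpha_def Q_def powr_half_sqrt powr_minus_divide)

lemma anf: "an q m = (Q - 1/Q) * (t * Q powi (m-n) - 1/(t * Q powi (m-n))) / 4"
  unfolding an_def af gaf using Q0 QQ
  by (simp add: field_simps power2_eq_square)
lemma cn_alt: "cn q m = bn q (m + 1) * Cn q m - alpha q * bn q m * Cn q (m - 1) - an q m * Cn q m"
  by (simp add: cn_def an_def)
definition "R = 1/Q"
definition "u = 1/t"
definition "h = (1/2::real)"
lemma QR: "Q*R = 1" using Q0 by (simp add: R_def)
lemma tu: "t*u = 1" using t0 by (simp add: u_def)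
lemma ee: "e*e = 1" using e1 by auto
lemma hh: "2*h = 1" by (simp add: h_def)
lemmas forms_at = Cf bf alf anf af R_def u_def h_def power_int_minus power_int_numeral field_simps Q0 t0
lemma atom_C_m4: "(Cn q (n - 4)) = (h*h*(1 - e*t*R^4)*(1 - e*t*R^5))"
  by (simp add: forms_at)
lemma atom_C_m3: "(Cn q (n - 3)) = (h*h*(1 - (-e)*t*R^3)*(1 - (-e)*t*R^4))"
  by (simp add: forms_at)
lemma atom_C_m2: "(Cn q (n - 2)) = (h*h*(1 - e*t*R^2)*(1 - e*t*R^3))"
  by (simp add: forms_at)
lemma atom_C_m1: "(Cn q (n - 1)) = (h*h*(1 - (-e)*t*R)*(1 - (-e)*t*R^2))"
  by (simp add: forms_at)
lemma atom_C_0: "(Cn q n) = (h*h*(1 - e*t)*(1 - e*t*R))"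
  by (simp add: forms_at)
lemma atom_C_1: "(Cn q (n + 1)) = (h*h*(1 - (-e)*t*Q)*(1 - (-e)*t))"
  by (simp add: forms_at)
lemma atom_C_2: "(Cn q (n + 2)) = (h*h*(1 - e*t*Q^2)*(1 - e*t*Q))"
  by (simp add: forms_at)
lemma atom_b_m3: "(bn q (n - 3)) = ((-h)*(1 - (-e)*t*R^3)*((-e) - u*Q^4))"
  by (simp add: forms_at)
lemma atom_b_m2: "(bn q (n - 2)) = ((-h)*(1 - e*t*R^2)*(e - u*Q^3))"
  by (simp add: forms_at)
lemma atom_b_m1: "(bn q (n - 1)) = ((-h)*(1 - (-e)*t*R)*((-e) - u*Q^2))"
  by (simp add: forms_at)
lemma atom_b_0: "(bn q n) = ((-h)*(1 - e*t)*(e - u*Q))"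
  by (simp add: forms_at)
lemma atom_b_1: "(bn q (n + 1)) = ((-h)*(1 - (-e)*t*Q)*((-e) - u))"
  by (simp add: forms_at)
lemma atom_b_2: "(bn q (n + 2)) = ((-h)*(1 - e*t*Q^2)*(e - u*R))"
  by (simp add: forms_at)
lemma atom_al_m1: "(alphan q (n - 1)) = ((t*R + u*Q)*h)"
  by (simp add: forms_at)
lemma atom_a_m1: "(an q (n - 1)) = ((Q-R)*(t*R - u*Q)*h*h)"
  by (simp add: forms_at)
lemma atom_al_0: "(alphan q n) = ((t + u)*h)"
  by (simp add: forms_at)
lemma atom_a_0: "(an q n) = ((Q-R)*(t - u)*h*h)"
  by (simp add: forms_at)
lemma atom_al_1: "(alphan q (n + 1)) = ((t*Q + u*R)*h)"
  by (simp add: forms_at)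
lemma atom_a_1: "(an q (n + 1)) = ((Q-R)*(t*Q - u*R)*h*h)"
  by (simp add: forms_at)
lemma atom_A: "alpha q = (Q+R)*h"
  by (simp add: forms_at)
lemmas atoms = atom_C_m4 atom_C_m3 atom_C_m2 atom_C_m1 atom_C_0 atom_C_1 atom_C_2 atom_b_m3 atom_b_m2 atom_b_m1 atom_b_0 atom_b_1 atom_b_2 atom_al_m1 atom_a_m1 atom_al_0 atom_a_0 atom_al_1 atom_a_1 atom_A

lemma cexp_m1: "cn q (n - 1) = bn q n * Cn q (n - 1) - alpha q * bn q (n - 1) * Cn q (n - 2) - an q (n - 1) * Cn q (n - 1)"
  by (simp add: cn_alt algebra_simps)
lemma cexp_0: "cn q n = bn q (n + 1) * Cn q n - alpha q * bn q n * Cn q (n - 1) - an q n * Cn q n"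
  by (simp add: cn_alt algebra_simps)
lemma cexp_1: "cn q (n + 1) = bn q (n + 2) * Cn q (n + 1) - alpha q * bn q (n + 1) * Cn q n - an q (n + 1) * Cn q (n + 1)"
  by (simp add: cn_alt algebra_simps)
lemma dexp_m1: "dn q (n - 1) = (bn q (n - 2) * Cn q (n - 1) - alpha q * bn q (n - 1) * Cn q (n - 2)) * Cn q (n - 3)"
  by (simp add: dn_def algebra_simps)
lemma dexp_0: "dn q n = (bn q (n - 1) * Cn q n - alpha q * bn q n * Cn q (n - 1)) * Cn q (n - 2)"
  by (simp add: dn_def algebra_simps)
lemma dexp_1: "dn q (n + 1) = (bn q n * Cn q (n + 1) - alpha q * bn q (n + 1) * Cn q n) * Cn q (n - 1)"
  by (simp add: dn_def algebra_simps)
lemmas cdexp = cexp_m1 cexp_0 cexp_1 dexp_m1 dexp_0 dexp_1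

lemma id_B1: "(an q (n + 1)) = (alpha q)*(an q n) + ((alpha q)^2-1)*(alphan q n)"
  unfolding cdexp atoms by (rule T_B1[OF QR tu ee hh])

lemma id_B2: "(cn q (n + 1)) = (alpha q)*(an q n)*(Cn q (n + 1)) + (alpha q)*(cn q n) + ((alpha q)^2-1)*(alphan q n)*((Cn q (n + 1))+(Cn q n)-1) + ((alpha q)^2-1)*(bn q n)*(Cn q (n - 1)) - (Cn q n)*(an q (n - 1))"
  unfolding cdexp atoms by (rule T_B2[OF QR tu ee hh])

lemma id_B3: "(dn q (n + 1)) = (alpha q)*(cn q n)*(Cn q (n - 1)) + (alpha q)*(dn q n) + ((alpha q)^2-1)*((alphan q n)*(Cn q n)*(Cn q (n - 1)) + (bn q n)*(Cn q (n - 1))*((Cn q (n - 1))+(Cn q (n - 2))-1)) - (Cn q n)*(cn q (n - 1))"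
  unfolding cdexp atoms by (rule T_B3[OF QR tu ee hh])

lemma id_B4i: "2*(alpha q)*(bn q (n - 1))*(Cn q n)*(Cn q (n - 2)) - (bn q n)*(Cn q (n - 1))*(Cn q (n - 2)) - (Cn q n)*(bn q (n - 2))*(Cn q (n - 1)) = 0"
  unfolding cdexp atoms by (rule T_B4i[OF QR tu ee hh])

lemma id_A1: "(alphan q (n + 1)) = (alpha q)*(alphan q n) + (an q n)"
  unfolding cdexp atoms by (rule T_A1[OF QR tu ee hh])

lemma id_A2: "(alpha q)*(alphan q n) - (alphan q (n - 1)) = (an q n)"
  unfolding cdexp atoms by (rule T_A2[OF QR tu ee hh])

end



definition XX :: "real \<Rightarrow> real \<Rightarrow> complex" where "XX q s = complex_of_real (xq q s)"
definition Sv :: "real \<Rightarrow> complex poly \<Rightarrow> real \<Rightarrow> complex" where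
  "Sv q f s = (poly f (XX q (s + 1/2)) + poly f (XX q (s - 1/2))) / 2"
definition Dl :: "real \<Rightarrow> complex poly \<Rightarrow> real \<Rightarrow> complex" where
  "Dl q f s = poly f (XX q (s + 1/2)) - poly f (XX q (s - 1/2))"
definition Wv :: "real \<Rightarrow> complex poly \<Rightarrow> real \<Rightarrow> complex" where
  "Wv q f s = (XX q (s + 1/2) - XX q (s - 1/2)) * Dl q f s / 4"
definition ac :: "real \<Rightarrow> complex" where "ac q = complex_of_real (alpha q)"

lemma xq_parts:
  assumes "0 < q"
  shows "xq q (s + 1/2) = (q powr s * q powr (1/2) + 1/(q powr s * q powr (1/2)))/2"
    "xq q (s - 1/2) = (q powr s / q powr (1/2) + q powr (1/2) / q powr s)/2"
    "xq q s = (q powr s + 1/ q powr s)/2"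
    "alpha q = (q powr (1/2) + 1/q powr (1/2))/2"
proof -
  have a: "q powr (-(s + 1/2)) = 1/(q powr s * q powr (1/2))"
    unfolding powr_minus powr_add inverse_eq_divide ..
  have b: "q powr (-(s - 1/2)) = q powr (1/2) / q powr s"
    unfolding powr_minus powr_diff inverse_divide ..
  show "xq q (s + 1/2) = (q powr s * q powr (1/2) + 1/(q powr s * q powr (1/2)))/2"
    unfolding xq_def a powr_add ..
  show "xq q (s - 1/2) = (q powr s / q powr (1/2) + q powr (1/2) / q powr s)/2"
    unfolding xq_def b powr_diff ..
  show "xq q s = (q powr s + 1/ q powr s)/2"
    unfolding xq_def powr_minus inverse_eq_divide ..
  have m: "(-1/2::real) = -(1/2)" by simp
  have c: "q powr (-1/2) = 1 / q powr (1/2)"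
    unfolding m powr_minus inverse_eq_divide ..
  show "alpha q = (q powr (1/2) + 1/q powr (1/2))/2"
    unfolding alpha_def c ..
qed

lemma xsum: assumes "0 < q"
  shows "xq q (s + 1/2) + xq q (s - 1/2) = 2 * alpha q * xq q s"
proof -
  have z: "q powr s > 0" "q powr (1/2) > 0" using assms by auto
  show ?thesis unfolding xq_parts(1,2)[OF assms] xq_parts(3)[OF assms, of s] xq_parts(4)[OF assms] using z by (simp add: field_simps)
qed

lemma xdiff: assumes "0 < q"
  shows "xq q (s + 1/2) - xq q (s - 1/2) = (q powr (1/2) - 1/q powr (1/2)) * (q powr s - 1/q powr s) / 2"
proof -
  have z: "q powr s > 0" "q powr (1/2) > 0" using assms by auto
  show ?thesis unfolding xq_parts(1,2)[OF assms] xq_parts(3)[OF assms, of s] using z by (simp add: field_simps)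
qed

lemma xdiff2: assumes "0 < q"
  shows "(xq q (s + 1/2) - xq q (s - 1/2))^2 = 4*((alpha q)^2-1)*((xq q s)^2-1)"
proof -
  have z: "q powr s > 0" "q powr (1/2) > 0" using assms by auto
  define r where "r = q powr (1/2)"
  define z where "z = q powr s"
  have r0: "r > 0" "z > 0" using assms by (auto simp: r_def z_def)
  have "((r - 1/r) * (z - 1/z) / 2)^2 = 4*(((r + 1/r)/2)^2-1)*(((z + 1/z)/2)^2-1)"
    using r0 by (simp add: field_simps power2_eq_square)
  then show ?thesis unfolding xdiff[OF assms] xq_parts(3)[OF assms, of s] xq_parts(4)[OF assms] r_def z_def .
qed

lemma XXsum: "0 < q \<Longrightarrow> XX q (s + 1/2) + XX q (s - 1/2) = 2 * ac q * XX q s"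
proof -
  assume q: "0 < q"
  have "complex_of_real (xq q (s + 1/2) + xq q (s - 1/2)) = complex_of_real (2 * alpha q * xq q s)"
    by (simp only: xsum[OF q])
  then show ?thesis unfolding XX_def ac_def by simp
qed

lemma XXdiff2: "0 < q \<Longrightarrow> (XX q (s + 1/2) - XX q (s - 1/2))^2 = 4*((ac q)^2-1)*((XX q s)^2-1)"
proof -
  assume q: "0 < q"
  have "complex_of_real ((xq q (s + 1/2) - xq q (s - 1/2))^2) = complex_of_real (4*((alpha q)^2-1)*((xq q s)^2-1))"
    using xdiff2[OF q] by simp
  then show ?thesis unfolding XX_def ac_def by simp
qed

lemma xq_nat: "0 < q \<Longrightarrow> xq q (real k) = (q^k + 1/q^k)/2"
  unfolding xq_def powr_minus inverse_eq_divide by (simp add: powr_realpow)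

lemma xq_mono: assumes "0 < q" "q < 1" "k < l" shows "xq q (real k) < xq q (real l)"
proof -
  define z where "z = q^k"
  define w where "w = q^l"
  have w0: "0 < w" using assms by (simp add: w_def)
  have wz: "w < z" using assms unfolding w_def z_def by (simp add: power_strict_decreasing)
  have z1: "z \<le> 1" using assms unfolding z_def by (simp add: power_le_one)
  have "w * z \<le> w" using w0 z1 by (simp add: mult_left_le)
  then have wz1: "w * z < 1" using wz z1 by linarith
  have p: "0 < (z - w) * (1 - w*z)" using wz wz1 by simp
  have "z + 1/z < w + 1/w"
  proof -
    have "(w + 1/w) - (z + 1/z) = (z - w) * (1 - w*z) / (w*z)"
      using w0 wz by (simp add: field_simps)
    also have "\<dots> > 0" using p w0 wz by simp
    finally show ?thesis by simp
  qed
  then show ?thesis using assms by (simp add: xq_nat z_def w_def)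
qed

lemma uniq:
  assumes "0 < q" "q < 1" "\<And>k. poly p (XX q (real (Suc k))) = poly r (XX q (real (Suc k)))"
  shows "p = r"
proof (rule ccontr)
  assume "p \<noteq> r"
  then have "p - r \<noteq> 0" by simp
  then have fin: "finite {y. poly (p - r) y = 0}" by (rule poly_roots_finite)
  have sub: "range (\<lambda>k. XX q (real (Suc k))) \<subseteq> {y. poly (p - r) y = 0}"
    using assms(3) by auto
  have "inj (\<lambda>k. XX q (real (Suc k)))"
  proof (rule injI)
    fix k l assume "XX q (real (Suc k)) = XX q (real (Suc l))"
    then have e: "xq q (real (Suc k)) = xq q (real (Suc l))" by (simp add: XX_def)
    show "k = l"
    proof (rule ccontr)
      assume "k \<noteq> l"
      then have "Suc k < Suc l \<or> Suc l < Suc k" by arith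
      then show False using xq_mono[OF assms(1,2), of "Suc k" "Suc l"] xq_mono[OF assms(1,2), of "Suc l" "Suc k"] e by auto
    qed
  qed
  then have inf: "infinite (range (\<lambda>k. XX q (real (Suc k))))" by (rule range_inj_infinite)
  have "finite (range (\<lambda>k. XX q (real (Suc k))))" by (rule finite_subset[OF sub fin])
  with inf show False by simp
qed

lemma sub_inv_neg: assumes "0 < (r::real)" "r < 1" shows "r - 1/r < 0"
proof -
  have "1 < 1/r" using assms by (simp add: field_simps)
  then show ?thesis using assms by linarith
qed

lemma xdiff_ne: assumes "0 < q" "q < 1"
  shows "xq q (real (Suc k) + 1/2) \<noteq> xq q (real (Suc k) - 1/2)"
proof -
  have r: "q powr (1/2) < 1" "0 < q powr (1/2)" using assms by (auto simp: powr_half_sqrt)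
  have zz: "q powr (real (Suc k)) = q ^ Suc k" using assms(1) by (rule powr_realpow)
  have z: "q powr (real (Suc k)) < 1" "0 < q powr (real (Suc k))" unfolding zz using assms
    by (simp_all add: power_Suc_less_one del: power_Suc)
  have "q powr (1/2) - 1/q powr (1/2) < 0" using r by (intro sub_inv_neg)
  moreover have "q powr (real (Suc k)) - 1/q powr (real (Suc k)) < 0" using z by (intro sub_inv_neg)
  ultimately have "(q powr (1/2) - 1/q powr (1/2)) * (q powr (real (Suc k)) - 1/q powr (real (Suc k))) / 2 > 0"
    by (simp add: mult_neg_neg)
  then show ?thesis using xdiff[OF assms(1), of "real (Suc k)"] by linarith
qed


lemma Sq_eq:
  assumes "0 < q" "q < 1" "\<And>s. Sv q f s = poly h (XX q s)"
  shows "Sq q f = h"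
  unfolding Sq_def
proof (rule the_equality)
  show "\<forall>s. poly h (complex_of_real (xq q s)) =
       (poly f (complex_of_real (xq q (s + 1 / 2))) + poly f (complex_of_real (xq q (s - 1 / 2)))) / 2"
    using assms(3) by (simp add: Sv_def XX_def)
  fix g assume g: "\<forall>s. poly g (complex_of_real (xq q s)) =
       (poly f (complex_of_real (xq q (s + 1 / 2))) + poly f (complex_of_real (xq q (s - 1 / 2)))) / 2"
  show "g = h"
  proof (rule uniq[OF assms(1,2)])
    fix k
    show "poly g (XX q (real (Suc k))) = poly h (XX q (real (Suc k)))"
      using g[rule_format, of "real (Suc k)"] assms(3)[of "real (Suc k)"] by (simp add: Sv_def XX_def)
  qed
qed

lemma Dq_eq:
  assumes "0 < q" "q < 1" "\<And>s. Dl q f s = (XX q (s + 1/2) - XX q (s - 1/2)) * poly g (XX q s)"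
  shows "Dq q f = g"
  unfolding Dq_def
proof (rule the_equality)
  show "\<forall>s. xq q (s + 1 / 2) \<noteq> xq q (s - 1 / 2) \<longrightarrow>
        poly g (complex_of_real (xq q s)) =
        (poly f (complex_of_real (xq q (s + 1 / 2))) - poly f (complex_of_real (xq q (s - 1 / 2)))) /
        complex_of_real (xq q (s + 1 / 2) - xq q (s - 1 / 2))"
  proof (intro allI impI)
    fix s assume ne: "xq q (s + 1 / 2) \<noteq> xq q (s - 1 / 2)"
    then have ne': "complex_of_real (xq q (s + 1 / 2) - xq q (s - 1 / 2)) \<noteq> 0" by simp
    have "poly f (complex_of_real (xq q (s + 1 / 2))) - poly f (complex_of_real (xq q (s - 1 / 2)))
       = complex_of_real (xq q (s + 1 / 2) - xq q (s - 1 / 2)) * poly g (complex_of_real (xq q s))"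
      using assms(3)[of s] by (simp add: Dl_def XX_def)
    then show "poly g (complex_of_real (xq q s)) =
        (poly f (complex_of_real (xq q (s + 1 / 2))) - poly f (complex_of_real (xq q (s - 1 / 2)))) /
        complex_of_real (xq q (s + 1 / 2) - xq q (s - 1 / 2))"
      using ne' by (simp add: field_simps)
  qed
  fix g' assume g': "\<forall>s. xq q (s + 1 / 2) \<noteq> xq q (s - 1 / 2) \<longrightarrow>
        poly g' (complex_of_real (xq q s)) =
        (poly f (complex_of_real (xq q (s + 1 / 2))) - poly f (complex_of_real (xq q (s - 1 / 2)))) /
        complex_of_real (xq q (s + 1 / 2) - xq q (s - 1 / 2))"
  show "g' = g"
  proof (rule uniq[OF assms(1,2)])
    fix k
    let ?s = "real (Suc k)"
    have ne: "xq q (?s + 1 / 2) \<noteq> xq q (?s - 1 / 2)" by (rule xdiff_ne[OF assms(1,2)])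
    then have ne': "complex_of_real (xq q (?s + 1 / 2) - xq q (?s - 1 / 2)) \<noteq> 0" by simp
    have A: "poly f (complex_of_real (xq q (?s + 1 / 2))) - poly f (complex_of_real (xq q (?s - 1 / 2)))
       = complex_of_real (xq q (?s + 1 / 2) - xq q (?s - 1 / 2)) * poly g (complex_of_real (xq q ?s))"
      using assms(3)[of ?s] by (simp add: Dl_def XX_def)
    have "poly g' (XX q ?s) = (poly f (complex_of_real (xq q (?s + 1 / 2))) - poly f (complex_of_real (xq q (?s - 1 / 2)))) /
        complex_of_real (xq q (?s + 1 / 2) - xq q (?s - 1 / 2))"
      using g'[rule_format, OF ne] unfolding XX_def .
    also have "\<dots> = poly g (XX q ?s)" unfolding A XX_def using ne' by simp
    finally show "poly g' (XX q ?s) = poly g (XX q ?s)" .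
  qed
qed

lemma ex_DS:
  assumes q: "0 < q"
  shows "\<exists>g h. \<forall>s. Dl q f s = (XX q (s + 1/2) - XX q (s - 1/2)) * poly g (XX q s) \<and> Sv q f s = poly h (XX q s)"
proof (induction f)
  case 0
  show ?case by (rule exI[of _ 0], rule exI[of _ 0]) (simp add: Dl_def Sv_def)
next
  case (pCons a p)
  then obtain g h where gh: "\<And>s. Dl q p s = (XX q (s + 1/2) - XX q (s - 1/2)) * poly g (XX q s)"
     "\<And>s. Sv q p s = poly h (XX q s)" by blast
  define g' where "g' = smult (ac q) ([:0,1:] * g) + h"
  define h' where "h' = [:a:] + smult (ac q) ([:0,1:] * h) + smult ((ac q)^2 - 1) ([:-1,0,1:] * g)"
  show ?case
  proof (rule exI[of _ g'], rule exI[of _ h'], intro allI conjI)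
    fix s
    let ?P = "XX q (s + 1/2)" and ?M = "XX q (s - 1/2)" and ?X = "XX q s"
    have s1: "?P + ?M = 2 * ac q * ?X" by (rule XXsum[OF q])
    have s2: "(?P - ?M)^2 = 4*((ac q)^2-1)*(?X^2-1)" by (rule XXdiff2[OF q])
    have d: "poly p ?P - poly p ?M = (?P - ?M) * poly g ?X" using gh(1)[of s] by (simp add: Dl_def)
    have e: "poly p ?P + poly p ?M = 2 * poly h ?X" using gh(2)[of s] by (simp add: Sv_def)
    show "Dl q (pCons a p) s = (?P - ?M) * poly g' ?X"
      unfolding Dl_def g'_def using s1 d e by simp algebra
    show "Sv q (pCons a p) s = poly h' ?X"
      unfolding Sv_def h'_def using s1 s2 d e by simp algebra
  qed
qed


lemma stepS:
  fixes S1 A x S0 W0 C0 Sm al0 p0 b0 Cm1 pm2 alm pm1 bm Cm2 pm3 a0 p1 c0 d0 al1 b1 :: complex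
  assumes "S1 = A*x*S0 + W0 - C0*Sm"
    "S0 = al0*p0 + (b0*Cm1)*pm2"
    "Sm = alm*pm1 + (bm*Cm2)*pm3"
    "W0 = a0*p1 + c0*pm1 + d0*pm3"
    "x*p0 = p1 + C0*pm1"
    "Cm1*(x*pm2) = Cm1*(pm1 + Cm2*pm3)"
    "al1 = A*al0 + a0"
    "A*al0 - alm = a0"
    "c0 = b1*C0 - A*b0*Cm1 - a0*C0"
    "d0 = (bm*C0 - A*b0*Cm1)*Cm2"
  shows "S1 = al1*p1 + (b1*C0)*pm1"
  using assms by algebra

lemma stepW:
  fixes W1 A x W0 S0 C0 Wm al0 p0 b0 Cm1 pm2 a0 p1 c0 pm1 d0 pm3 am cm dm pm4 p2 C1 Cm2 Cm3 bm bm2 a1 c1 d1 :: complex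
  assumes "W1 = A*x*W0 + (A^2-1)*(x^2-1)*S0 - C0*Wm"
    "S0 = al0*p0 + (b0*Cm1)*pm2"
    "W0 = a0*p1 + c0*pm1 + d0*pm3"
    "Wm = am*p0 + cm*pm2 + dm*pm4"
    "x*p0 = p1 + C0*pm1"
    "x*p1 = p2 + C1*p0"
    "x*pm1 = p0 + Cm1*pm2"
    "Cm1*(x*pm2) = Cm1*(pm1 + Cm2*pm3)"
    "Cm2*(x*pm3) = Cm2*(pm2 + Cm3*pm4)"
    "d0 = (bm*C0 - A*b0*Cm1)*Cm2"
    "dm = (bm2*Cm1 - A*bm*Cm2)*Cm3"
    "a1 = A*a0 + (A^2-1)*al0"
    "c1 = A*a0*C1 + A*c0 + (A^2-1)*al0*(C1+C0-1) + (A^2-1)*b0*Cm1 - C0*am"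
    "d1 = A*c0*Cm1 + A*d0 + (A^2-1)*(al0*C0*Cm1 + b0*Cm1*(Cm1+Cm2-1)) - C0*cm"
    "2*A*bm*C0*Cm2 - b0*Cm1*Cm2 - C0*bm2*Cm1 = 0"
  shows "W1 = a1*p2 + c1*p0 + d1*pm2"
  using assms by algebra


lemma Cn0: "0 < q \<Longrightarrow> Cn q 0 = 0"
  by (simp add: Cn_def)

lemma recP: assumes "0 \<le> n"
  shows "P q (n+1) = [:0,1:] * P q n - smult (complex_of_real (Cn q n)) (P q (n-1))"
proof -
  obtain m where m: "n = int m" using assms by (metis nonneg_eq_int)
  show ?thesis
  proof (cases m)
    case 0 then show ?thesis using m by (simp add: P_def)
  next
    case (Suc k)
    then have "nat (n + 1) = Suc (Suc k)" "nat n = Suc k" "nat (n - 1) = k" "n = int k + 1"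
      using m by auto
    then show ?thesis using m by (simp add: P_def)
  qed
qed

lemma recX: "0 \<le> j \<Longrightarrow> y * poly (P q j) y = poly (P q (j+1)) y + complex_of_real (Cn q j) * poly (P q (j-1)) y"
  by (simp add: recP)

lemma recC: assumes "0 < q"
  shows "complex_of_real (Cn q (j+1)) * (y * poly (P q j) y) = complex_of_real (Cn q (j+1)) * (poly (P q (j+1)) y + complex_of_real (Cn q j) * poly (P q (j-1)) y)"
proof -
  consider "0 \<le> j" | "j = -1" | "j < -1" by linarith
  then show ?thesis
  proof cases
    case 1 then show ?thesis by (simp add: recX)
  next
    case 2 then show ?thesis using Cn0[OF assms] by simp
  next
    case 3 then show ?thesis by (simp add: P_def)
  qed
qed

lemma Sv_rec: assumes "0 < q" "0 \<le> n"
  shows "Sv q (P q (n+1)) s = ac q * XX q s * Sv q (P q n) s + Wv q (P q n) s - complex_of_real (Cn q n) * Sv q (P q (n-1)) s"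
proof -
  let ?P = "XX q (s + 1/2)" and ?M = "XX q (s - 1/2)" and ?X = "XX q s"
  have s1: "?P + ?M = 2 * ac q * ?X" by (rule XXsum[OF assms(1)])
  show ?thesis unfolding recP[OF assms(2)] Sv_def Wv_def Dl_def using s1 by simp algebra
qed

lemma Wv_rec: assumes "0 < q" "0 \<le> n"
  shows "Wv q (P q (n+1)) s = ac q * XX q s * Wv q (P q n) s + ((ac q)^2-1)*((XX q s)^2-1) * Sv q (P q n) s - complex_of_real (Cn q n) * Wv q (P q (n-1)) s"
proof -
  let ?P = "XX q (s + 1/2)" and ?M = "XX q (s - 1/2)" and ?X = "XX q s"
  have s1: "?P + ?M = 2 * ac q * ?X" by (rule XXsum[OF assms(1)])
  have s2: "(?P - ?M)^2 = 4*((ac q)^2-1)*(?X^2-1)" by (rule XXdiff2[OF assms(1)])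
  show ?thesis unfolding recP[OF assms(2)] Sv_def Wv_def Dl_def using s1 s2 by simp algebra
qed

definition GG :: "real \<Rightarrow> int \<Rightarrow> complex poly" where
  "GG q n = smult (complex_of_real (alphan q n)) (P q n)
                        + smult (complex_of_real (bn q n * Cn q (n - 1))) (P q (n - 2))"
definition HH :: "real \<Rightarrow> int \<Rightarrow> complex poly" where
  "HH q n = smult (complex_of_real (an q n)) (P q (n + 1))
                        + smult (complex_of_real (cn q n)) (P q (n - 1))
                        + smult (complex_of_real (dn q n)) (P q (n - 3))"
definition Phi :: "real \<Rightarrow> int \<Rightarrow> bool" where
  "Phi q n = (\<forall>s. Sv q (P q n) s = poly (GG q n) (XX q s) \<and> Wv q (P q n) s = poly (HH q n) (XX q s))"

lemma step:
  assumes q0: "0 < q" and q1: "q < 1" and n1: "1 \<le> n" and Pm: "Phi q (n-1)" and P0: "Phi q n"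
  shows "Phi q (n+1)"
  unfolding Phi_def
proof (intro allI conjI)
  fix s
  interpret qq q n by unfold_locales (rule q0, rule q1)
  have i: "n - 1 - 1 = n - 2" "n - 1 - 2 = n - 3" "n - 1 + 1 = n" "n - 1 - 3 = n - 4"
     "n + 1 - 1 = n" "n + 1 - 2 = n - 1" "n + 1 + 1 = n + 2" "n + 1 - 3 = n - 2"
     "n - 2 + 1 = n - 1" "n - 3 + 1 = n - 2" "n - 2 - 1 = n - 3" "n - 3 - 1 = n - 4" by simp_all
  let ?x = "XX q s"
  let ?p = "\<lambda>j. poly (P q j) ?x"
  let ?c = "\<lambda>r. complex_of_real r"
  have Sm: "Sv q (P q (n-1)) s = ?c (alphan q (n-1)) * ?p (n-1) + (?c (bn q (n-1)) * ?c (Cn q (n-2))) * ?p (n-3)"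
    using Pm unfolding Phi_def GG_def i by simp
  have S0: "Sv q (P q n) s = ?c (alphan q n) * ?p n + (?c (bn q n) * ?c (Cn q (n-1))) * ?p (n-2)"
    using P0 unfolding Phi_def GG_def i by simp
  have Wm: "Wv q (P q (n-1)) s = ?c (an q (n-1)) * ?p n + ?c (cn q (n-1)) * ?p (n-2) + ?c (dn q (n-1)) * ?p (n-4)"
    using Pm unfolding Phi_def HH_def i by simp
  have W0: "Wv q (P q n) s = ?c (an q n) * ?p (n+1) + ?c (cn q n) * ?p (n-1) + ?c (dn q n) * ?p (n-3)"
    using P0 unfolding Phi_def HH_def i by simp
  have r1: "?x * ?p n = ?p (n+1) + ?c (Cn q n) * ?p (n-1)" using n1 by (simp add: recX)
  have r1': "?x * ?p (n+1) = ?p (n+2) + ?c (Cn q (n+1)) * ?p n" using n1 recX[of "n+1" ?x q] by (simp add: i)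
  have r0: "?x * ?p (n-1) = ?p n + ?c (Cn q (n-1)) * ?p (n-2)" using n1 recX[of "n-1" ?x q] by (simp add: i)
  have r2: "?c (Cn q (n-1)) * (?x * ?p (n-2)) = ?c (Cn q (n-1)) * (?p (n-1) + ?c (Cn q (n-2)) * ?p (n-3))"
    using recC[OF q0, of "n-2" ?x] by (simp add: i)
  have r3: "?c (Cn q (n-2)) * (?x * ?p (n-3)) = ?c (Cn q (n-2)) * (?p (n-2) + ?c (Cn q (n-3)) * ?p (n-4))"
    using recC[OF q0, of "n-3" ?x] by (simp add: i)
  have hS: "Sv q (P q (n+1)) s = ac q * ?x * Sv q (P q n) s + Wv q (P q n) s - ?c (Cn q n) * Sv q (P q (n-1)) s"
    using Sv_rec[OF q0, of n s] n1 by simp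
  have hW: "Wv q (P q (n+1)) s = ac q * ?x * Wv q (P q n) s + ((ac q)^2-1)*(?x^2-1) * Sv q (P q n) s - ?c (Cn q n) * Wv q (P q (n-1)) s"
    using Wv_rec[OF q0, of n s] n1 by simp
  have A1: "?c (alphan q (n+1)) = ac q * ?c (alphan q n) + ?c (an q n)"
    using arg_cong[OF id_A1, of complex_of_real] by (simp add: ac_def)
  have A2: "ac q * ?c (alphan q n) - ?c (alphan q (n-1)) = ?c (an q n)"
    using arg_cong[OF id_A2, of complex_of_real] by (simp add: ac_def)
  have c0: "?c (cn q n) = ?c (bn q (n+1)) * ?c (Cn q n) - ac q * ?c (bn q n) * ?c (Cn q (n-1)) - ?c (an q n) * ?c (Cn q n)"
    using arg_cong[OF cexp_0, of complex_of_real] by (simp add: ac_def)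
  have d0: "?c (dn q n) = (?c (bn q (n-1)) * ?c (Cn q n) - ac q * ?c (bn q n) * ?c (Cn q (n-1))) * ?c (Cn q (n-2))"
    using arg_cong[OF dexp_0, of complex_of_real] by (simp add: ac_def)
  have dm: "?c (dn q (n-1)) = (?c (bn q (n-2)) * ?c (Cn q (n-1)) - ac q * ?c (bn q (n-1)) * ?c (Cn q (n-2))) * ?c (Cn q (n-3))"
    using arg_cong[OF dexp_m1, of complex_of_real] by (simp add: ac_def)
  have B1: "?c (an q (n+1)) = ac q * ?c (an q n) + ((ac q)^2-1) * ?c (alphan q n)"
    using arg_cong[OF id_B1, of complex_of_real] by (simp add: ac_def)
  have B2: "?c (cn q (n+1)) = ac q * ?c (an q n) * ?c (Cn q (n+1)) + ac q * ?c (cn q n)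
      + ((ac q)^2-1) * ?c (alphan q n) * (?c (Cn q (n+1)) + ?c (Cn q n) - 1)
      + ((ac q)^2-1) * ?c (bn q n) * ?c (Cn q (n-1)) - ?c (Cn q n) * ?c (an q (n-1))"
    using arg_cong[OF id_B2, of complex_of_real] by (simp add: ac_def)
  have B3: "?c (dn q (n+1)) = ac q * ?c (cn q n) * ?c (Cn q (n-1)) + ac q * ?c (dn q n)
      + ((ac q)^2-1) * (?c (alphan q n) * ?c (Cn q n) * ?c (Cn q (n-1))
          + ?c (bn q n) * ?c (Cn q (n-1)) * (?c (Cn q (n-1)) + ?c (Cn q (n-2)) - 1))
      - ?c (Cn q n) * ?c (cn q (n-1))"
    using arg_cong[OF id_B3, of complex_of_real] by (simp add: ac_def)
  have B4: "2 * ac q * ?c (bn q (n-1)) * ?c (Cn q n) * ?c (Cn q (n-2)) - ?c (bn q n) * ?c (Cn q (n-1)) * ?c (Cn q (n-2))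
      - ?c (Cn q n) * ?c (bn q (n-2)) * ?c (Cn q (n-1)) = 0"
    using arg_cong[OF id_B4i, of complex_of_real] by (simp add: ac_def)
  have "Sv q (P q (n+1)) s = ?c (alphan q (n+1)) * ?p (n+1) + (?c (bn q (n+1)) * ?c (Cn q n)) * ?p (n-1)"
    by (rule stepS[OF hS S0 Sm W0 r1 r2 A1 A2 c0 d0])
  then show "Sv q (P q (n+1)) s = poly (GG q (n+1)) ?x"
    unfolding GG_def i by simp
  have "Wv q (P q (n+1)) s = ?c (an q (n+1)) * ?p (n+2) + ?c (cn q (n+1)) * ?p n + ?c (dn q (n+1)) * ?p (n-2)"
    by (rule stepW[OF hW S0 W0 Wm r1 r1' r0 r2 r3 d0 dm B1 B2 B3 B4])
  then show "Wv q (P q (n+1)) s = poly (HH q (n+1)) ?x"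
    unfolding HH_def i by simp
qed


lemma base_coeffs:
  assumes q0: "0 < q" and q1: "q < 1"
  shows "Cn q 0 = 0" "alphan q 0 = 1" "an q 0 = 0" "alphan q 1 = alpha q"
    "an q 1 = (alpha q)^2 - 1" "cn q 1 = an q 1 * Cn q 1 - ((alpha q)^2 - 1)"
proof -
  show "Cn q 0 = 0" using q0 by (rule Cn0)
  show "alphan q 0 = 1" using q0 by (simp add: alphan_def)
  show "an q 0 = 0" by (simp add: an_def gamman_def)
  show "alphan q 1 = alpha q" by (simp add: alphan_def alpha_def)
  interpret qq q 1 by unfold_locales (rule q0, rule q1)
  have e: "e = -1" by (simp add: e_def)
  have t: "t = Q" by (simp add: t_def)
  have u: "u = R" by (simp add: u_def t R_def)
  show a1: "an q 1 = (alpha q)^2 - 1"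
    unfolding atom_a_0 atom_A t u using QR hh by algebra
  show "cn q 1 = an q 1 * Cn q 1 - ((alpha q)^2 - 1)"
    unfolding cexp_0 atoms using QR hh e t u by algebra
qed

lemma Phi0: assumes "0 < q" "q < 1" shows "Phi q 0"
  unfolding Phi_def GG_def HH_def using base_coeffs[OF assms]
  by (simp add: P_def Sv_def Wv_def Dl_def)

lemma Phi1: assumes q0: "0 < q" and q1: "q < 1" shows "Phi q 1"
  unfolding Phi_def
proof (intro allI conjI)
  fix s
  note bc = base_coeffs[OF q0 q1]
  let ?P = "XX q (s + 1/2)" and ?M = "XX q (s - 1/2)" and ?X = "XX q s"
  have s1: "?P + ?M = 2 * ac q * ?X" by (rule XXsum[OF q0])
  have s2: "(?P - ?M)^2 = 4*((ac q)^2-1)*(?X^2-1)" by (rule XXdiff2[OF q0])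
  have P1: "P q 1 = [:0,1:]" by (simp add: P_def)
  have P2: "P q 2 = [:0,1:] * [:0,1:] - smult (complex_of_real (Cn q 1)) 1"
    using recP[of 1 q] by (simp add: P_def)
  have P0: "P q 0 = 1" by (simp add: P_def)
  have Pm2: "P q (1 - 3) = 0" "P q (-2) = 0" "P q (1 + 1) = P q 2" "P q (1 - 1) = P q 0" by (simp_all add: P_def)
  show "Sv q (P q 1) s = poly (GG q 1) ?X"
    unfolding GG_def P1 using s1 bc by (simp add: Sv_def P_def ac_def)
  have c1: "complex_of_real (cn q 1) = complex_of_real (an q 1) * complex_of_real (Cn q 1) - ((ac q)^2 - 1)"
    using arg_cong[OF bc(6), of complex_of_real] by (simp add: ac_def)
  have a1: "complex_of_real (an q 1) = (ac q)^2 - 1"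
    using arg_cong[OF bc(5), of complex_of_real] by (simp add: ac_def)
  show "Wv q (P q 1) s = poly (HH q 1) ?X"
    unfolding HH_def P1 Wv_def Dl_def using s2 c1 a1
    by (simp add: P2 P0 Pm2) algebra
qed

lemma Phi_all: assumes "0 < q" "q < 1" shows "Phi q (int m) \<and> Phi q (int m + 1)"
proof (induction m)
  case 0 then show ?case using Phi0[OF assms] Phi1[OF assms] by simp
next
  case (Suc m)
  have "Phi q (int m + 1 + 1)"
    using step[OF assms, of "int m + 1"] Suc by simp
  moreover have "int (Suc m) = int m + 1" "int (Suc m) + 1 = int m + 1 + 1" by simp_all
  ultimately show ?case using Suc by metis
qed

theorem mainTheorem5:
  fixes q :: real and n :: int
  assumes "0 < q" and "q < 1" and "n \<ge> 1"
  shows "Sq q (P q n) = smult (complex_of_real (alphan q n)) (P q n)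
                        + smult (complex_of_real (bn q n * Cn q (n - 1))) (P q (n - 2))
         \<and> U2 q * Dq q (P q n) = smult (complex_of_real (an q n)) (P q (n + 1))
                        + smult (complex_of_real (cn q n)) (P q (n - 1))
                        + smult (complex_of_real (dn q n)) (P q (n - 3))"
proof -
  obtain m where m: "n = int m" using assms(3) by (metis nonneg_eq_int order_trans zero_le_one)
  have Ph: "Phi q n" using Phi_all[OF assms(1,2), of m] m by simp
  have S: "Sq q (P q n) = GG q n"
    by (rule Sq_eq[OF assms(1,2)]) (use Ph in \<open>simp add: Phi_def\<close>)
  obtain g h where gh: "\<And>s. Dl q (P q n) s = (XX q (s + 1/2) - XX q (s - 1/2)) * poly g (XX q s)"
    "\<And>s. Sv q (P q n) s = poly h (XX q s)"
    using ex_DS[OF assms(1), of "P q n"] by blast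
  have D: "Dq q (P q n) = g" by (rule Dq_eq[OF assms(1,2) gh(1)])
  have U: "U2 q * g = HH q n"
  proof (rule uniq[OF assms(1,2)])
    fix k
    let ?s = "real (Suc k)"
    let ?P = "XX q (?s + 1/2)" and ?M = "XX q (?s - 1/2)" and ?X = "XX q ?s"
    have s2: "(?P - ?M)^2 = 4*((ac q)^2-1)*(?X^2-1)" by (rule XXdiff2[OF assms(1)])
    have w1: "Wv q (P q n) ?s = poly (HH q n) ?X" using Ph by (simp add: Phi_def)
    have w2: "Wv q (P q n) ?s = (?P - ?M)^2 * poly g ?X / 4"
      unfolding Wv_def gh(1) by (simp add: power2_eq_square)
    have p: "poly (U2 q * g) ?X = ((ac q)^2-1)*(?X^2-1) * poly g ?X"
      by (simp add: U2_def ac_def power2_eq_square algebra_simps)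
    have "poly (U2 q * g) ?X = (?P - ?M)^2 * poly g ?X / 4" unfolding p s2 by simp
    then show "poly (U2 q * g) ?X = poly (HH q n) ?X" using w1 w2 by metis
  qed
  show ?thesis using S D U unfolding GG_def HH_def by simp
qed

end
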